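(* Let $M$ be a finite monoid. Every filtered left $M$-set is isomorphic to $Me$ for some idempotent $e\in M$. Moreover, $e\mapsto Me$ yields an equivalence of categories $\mathfrak I(M)^{op}\simeq \mathbf{Pts}(M)$, where $\mathbf{Pts}(M)$ is identified (via Diaconescu's theorem) with the category of filtered left $M$-sets and $M$-equivariant maps.
   Context: A left $M$-set $A$ is filtered if the functor $(-)\otimes_M A$ from right $M$-sets to sets preserves finite limits; equivalently (F1) $A\neq\emptyset$; (F2) if $m_1a=m_2a$ ($m_i\in M,a\in A$) then there are $m\in M,\tilde a\in A$ with $m\tilde a=a$, $m_1m=m_2m$; (F3) for $a_1,a_2\in A$ there are $m_1,m_2\in M$, $a\in A$ with $m_ia=a_i$. $\mathbf{Pts}(M)$ is the category of points of the topos of right $M$-sets. The category $\mathfrak I(M)$ has as objects the idempotents of $M$, with $\mathrm{Hom}_{\mathfrak I(M)}(e,f)=fMe=\{fme\mid m\in M\}$, composition given by multiplication in $M$ (the composite of $fme:e\to f$ and $gnf:f\to g$ is $gnfme$), and identity of $e$ equal to $e$. Here $Me=\{me\mid m\in M\}$ is a left $M$-set under left multiplication; an element $a\in eMf$ corresponds to the $M$-map $Me\to Mf$, $me\mapsto ma$. *)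

theory Defs
  imports "HOL-Library.FuncSet"
begin

text \<open>The monoid M is the whole (finite) type 'a of class monoid_mult.
A left M-set is a carrier set A together with an action act.\<close>

definition left_mset :: "'b set \<Rightarrow> ('a::monoid_mult \<Rightarrow> 'b \<Rightarrow> 'b) \<Rightarrow> bool" where
  "left_mset A act \<longleftrightarrow>
     (\<forall>m a. a \<in> A \<longrightarrow> act m a \<in> A) \<and>
     (\<forall>a\<in>A. act 1 a = a) \<and>
     (\<forall>m n a. a \<in> A \<longrightarrow> act (m * n) a = act m (act n a))"

definition filtered :: "'b set \<Rightarrow> ('a::monoid_mult \<Rightarrow> 'b \<Rightarrow> 'b) \<Rightarrow> bool" where
  "filtered A act \<longleftrightarrow>
     A \<noteq> {} \<and>
     (\<forall>m1 m2 a. a \<in> A \<longrightarrow> act m1 a = act m2 a \<longrightarrow>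
        (\<exists>m a'. a' \<in> A \<and> act m a' = a \<and> m1 * m = m2 * m)) \<and>
     (\<forall>a1\<in>A. \<forall>a2\<in>A. \<exists>m1 m2 a. a \<in> A \<and> act m1 a = a1 \<and> act m2 a = a2)"

definition mset_hom :: "'b set \<Rightarrow> ('a::monoid_mult \<Rightarrow> 'b \<Rightarrow> 'b) \<Rightarrow> 'c set \<Rightarrow> ('a \<Rightarrow> 'c \<Rightarrow> 'c) \<Rightarrow> ('b \<Rightarrow> 'c) \<Rightarrow> bool" where
  "mset_hom A act B act' h \<longleftrightarrow>
     (\<forall>a\<in>A. h a \<in> B) \<and> (\<forall>m a. a \<in> A \<longrightarrow> h (act m a) = act' m (h a))"

definition mset_iso :: "'b set \<Rightarrow> ('a::monoid_mult \<Rightarrow> 'b \<Rightarrow> 'b) \<Rightarrow> 'c set \<Rightarrow> ('a \<Rightarrow> 'c \<Rightarrow> 'c) \<Rightarrow> bool" where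
  "mset_iso A act B act' \<longleftrightarrow> (\<exists>h. mset_hom A act B act' h \<and> bij_betw h A B)"

definition idempotent :: "'a::monoid_mult \<Rightarrow> bool" where
  "idempotent e \<longleftrightarrow> e * e = e"

text \<open>The left M-set Me (action: left multiplication).\<close>
definition principal :: "'a::monoid_mult \<Rightarrow> 'a set" where
  "principal e = {m * e | m. True}"

text \<open>Hom in the category I(M): Hom(e,f) = fMe.\<close>
definition homI :: "'a::monoid_mult \<Rightarrow> 'a \<Rightarrow> 'a set" where
  "homI e f = {f * m * e | m. True}"

text \<open>Action of the functor I(M)^op -> filtered M-sets on morphisms:
  a : e -> f in I(M) (a \<in> fMe) goes to the M-map Mf -> Me, x \<mapsto> x a.\<close>
definition Fmor :: "'a::monoid_mult \<Rightarrow> 'a \<Rightarrow> 'a \<Rightarrow> 'a" where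
  "Fmor f a = (\<lambda>x\<in>principal f. x * a)"

end

theory Submission
  imports Defs
begin

lemma cyclic:
  fixes act :: "'a::{monoid_mult,finite} \<Rightarrow> 'b \<Rightarrow> 'b"
  assumes L: "left_mset A act" and F: "filtered A act"
  shows "\<exists>a\<in>A. A = range (\<lambda>m. act m a)"
proof -
  let ?o = "\<lambda>a. range (\<lambda>m. act m a)"
  from F obtain a1 where a1: "a1 \<in> A" unfolding filtered_def by blast
  have bd: "\<forall>y. (\<exists>a\<in>A. y = card (?o a)) \<longrightarrow> y \<le> card (UNIV::'a set)"
    by (auto intro: card_image_le)
  obtain n where n: "\<exists>a\<in>A. n = card (?o a)"
    and nmax: "\<forall>y. (\<exists>a\<in>A. y = card (?o a)) \<longrightarrow> y \<le> n"
    using Nat.ex_has_greatest_nat[of "\<lambda>y. \<exists>a\<in>A. y = card (?o a)", OF _ bd] a1 by blast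
  then obtain a0 where a0: "a0 \<in> A" "n = card (?o a0)" by blast
  have "A = ?o a0"
  proof
    show "?o a0 \<subseteq> A" using L a0 unfolding left_mset_def by auto
    show "A \<subseteq> ?o a0"
    proof
      fix b assume b: "b \<in> A"
      from F a0(1) b obtain m1 m2 c where c: "c \<in> A" "act m1 c = a0" "act m2 c = b"
        unfolding filtered_def by meson
      have sub: "?o a0 \<subseteq> ?o c"
      proof
        fix y assume "y \<in> ?o a0"
        then obtain m where "y = act m a0" by blast
        then have "y = act (m * m1) c" using L c unfolding left_mset_def by auto
        then show "y \<in> ?o c" by blast
      qed
      have "card (?o c) \<le> card (?o a0)" using nmax c a0 by blast
      then have "?o a0 = ?o c" using card_subset_eq[OF _ sub] card_mono[OF _ sub] by simp
      then show "b \<in> ?o a0" using c by auto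
    qed
  qed
  then show ?thesis using a0 by blast
qed

lemma equalizer:
  fixes act :: "'a::{monoid_mult,finite} \<Rightarrow> 'b \<Rightarrow> 'b"
  assumes L: "left_mset A act" and F: "filtered A act" and a: "a \<in> A"
    and T: "finite T" "T \<subseteq> {(p,q). act p a = act q a}"
  shows "\<exists>x b. b \<in> A \<and> act x b = a \<and> (\<forall>(p,q)\<in>T. p*x = q*x)"
  using T
proof (induction T rule: finite_induct)
  case empty
  show ?case using a L unfolding left_mset_def by (intro exI[of _ 1] exI[of _ a]) auto
next
  case (insert pq T)
  then obtain x b where xb: "b \<in> A" "act x b = a" "\<forall>(p,q)\<in>T. p*x = q*x" by auto
  obtain p q where pq: "pq = (p,q)" by fastforce
  have "act p a = act q a" using insert pq by auto
  then have "act (p*x) b = act (q*x) b" using L xb unfolding left_mset_def by auto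
  then obtain m b' where m: "b' \<in> A" "act m b' = b" "p*x*m = q*x*m"
    using F xb(1) unfolding filtered_def by meson
  have "act (x*m) b' = a" using L m xb unfolding left_mset_def by auto
  moreover have "\<forall>(p',q')\<in>insert pq T. p'*(x*m) = q'*(x*m)"
    using xb(3) m(3) pq by (auto simp: mult.assoc[symmetric])
  ultimately show ?case using m(1) by blast
qed

lemma power_period:
  fixes x :: "'a::monoid_mult"
  assumes "x^i = x^(i+d)" "i \<le> n"
  shows "x^(n + t*d) = x^n"
proof (induction t)
  case 0 then show ?case by simp
next
  case (Suc t)
  obtain m where nm: "n = m + i" using assms(2) by (metis le_add_diff_inverse2)
  have "x^(n + Suc t * d) = x^(m + t*d) * x^(i+d)" by (simp add: nm power_add[symmetric] algebra_simps)
  also have "\<dots> = x^(m + t*d) * x^i" using assms(1) by simp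
  also have "\<dots> = x^(n + t*d)" by (simp add: nm power_add[symmetric] algebra_simps)
  finally show ?case using Suc by simp
qed

lemma idem_power:
  fixes x :: "'a::{monoid_mult,finite}"
  shows "\<exists>k\<ge>1. x^k * x^k = x^k"
proof -
  have "\<not> inj (\<lambda>i::nat. x^i)"
  proof
    assume "inj (\<lambda>i::nat. x^i)"
    then have "infinite (range (\<lambda>i::nat. x^i))" using finite_imageD by blast
    then show False by simp
  qed
  then obtain i j :: nat where "i \<noteq> j" "x^i = x^j" unfolding inj_def by blast
  then obtain i d where id: "d > 0" "x^i = x^(i+d)"
    by (metis linorder_neqE_nat less_imp_add_positive)
  define k where "k = (i+1)*d"
  have "i*1 \<le> i*d" using id(1) by (intro mult_le_mono) auto
  then have "i \<le> i*d" by simp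
  then have k2: "i \<le> k" unfolding k_def distrib_right by linarith
  have "1 \<le> k" using id(1) by (simp add: k_def)
  note k = this k2
  have "x^k * x^k = x^(k + (i+1)*d)" by (simp add: power_add k_def)
  also have "\<dots> = x^k" by (rule power_period[OF id(2) k(2)])
  finally show ?thesis using k by blast
qed

lemma power_eq_right:
  fixes x :: "'a::monoid_mult"
  assumes "p * x = q * x" "k \<ge> 1"
  shows "p * x^k = q * x^k"
proof -
  obtain j where "k = Suc j" using assms(2) by (cases k) auto
  then show ?thesis using assms(1) by (simp add: mult.assoc[symmetric])
qed

lemma power_fix:
  fixes act :: "'a::monoid_mult \<Rightarrow> 'b \<Rightarrow> 'b"
  assumes L: "left_mset A act" and "a \<in> A" "act x a = a"
  shows "act (x^k) a = a"
proof (induction k)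
  case 0 then show ?case using L assms unfolding left_mset_def by auto
next
  case (Suc k) then show ?case using L assms unfolding left_mset_def by (simp add: power_Suc2)
qed

lemma part1:
  fixes act :: "'a::{monoid_mult,finite} \<Rightarrow> 'b \<Rightarrow> 'b"
  assumes L: "left_mset A act" and F: "filtered A act"
  shows "\<exists>e::'a. idempotent e \<and> mset_iso A act (principal e) (*)"
proof -
  obtain a where a: "a \<in> A" "A = range (\<lambda>m. act m a)" using cyclic[OF L F] by blast
  let ?S = "{(p,q). act p a = act q a}"
  have "finite ?S" by (rule finite_subset[of _ UNIV]) auto
  then obtain x b where xb: "b \<in> A" "act x b = a" "\<forall>(p,q)\<in>?S. p*x = q*x"
    using equalizer[OF L F a(1), of ?S] by blast
  have "b \<in> range (\<lambda>m. act m a)" using xb(1) a(2) by simp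
  then obtain k0 where k0: "b = act k0 a" by blast
  define y where "y = x * k0"
  have "act y a = act x (act k0 a)" using L a(1) unfolding y_def left_mset_def by blast
  then have ya: "act y a = a" using xb(2) k0 by simp
  have yS: "p*y = q*y" if "act p a = act q a" for p q
  proof -
    have "p*x = q*x" using xb(3) that by blast
    then show ?thesis unfolding y_def by (metis mult.assoc)
  qed
  obtain k where k: "k \<ge> 1" "y^k * y^k = y^k" using idem_power by blast
  define e where "e = y^k"
  have idem: "idempotent e" using k by (simp add: idempotent_def e_def)
  have ea: "act e a = a" unfolding e_def by (rule power_fix[OF L a(1) ya])
  have act_e: "act m a = act (m * e) a" for m
  proof -
    have "act (m * e) a = act m (act e a)" using L a(1) unfolding left_mset_def by blast
    then show ?thesis using ea by simp
  qed
  have keq: "act p a = act q a \<longleftrightarrow> p * e = q * e" for p q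
  proof
    assume "act p a = act q a"
    then have "p*y = q*y" by (rule yS)
    then show "p * e = q * e" unfolding e_def using power_eq_right k(1) by blast
  next
    assume "p * e = q * e" then show "act p a = act q a" using act_e by metis
  qed
  define g where "g c = (SOME m. c = act m a)" for c
  have g: "c = act (g c) a" if c: "c \<in> A" for c
  proof -
    have "\<exists>m. c = act m a" using a(2) c by blast
    then show ?thesis unfolding g_def by (rule someI_ex)
  qed
  define h where "h c = g c * e" for c
  have "mset_hom A act (principal e) (*) h"
    unfolding mset_hom_def
  proof safe
    fix c assume "c \<in> A" then show "h c \<in> principal e" by (auto simp: h_def principal_def)
  next
    fix m c assume c: "c \<in> A"
    have mc: "act m c \<in> A" using L c unfolding left_mset_def by auto
    have "act (g (act m c)) a = act m c" using g[OF mc] by simp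
    also have "\<dots> = act m (act (g c) a)" using g[OF c] by simp
    also have "\<dots> = act (m * g c) a" using L a unfolding left_mset_def by simp
    finally have "g (act m c) * e = m * g c * e" using keq by simp
    then show "h (act m c) = m * h c" by (simp add: h_def mult.assoc)
  qed
  moreover have "bij_betw h A (principal e)"
    unfolding bij_betw_def
  proof
    show "inj_on h A"
    proof (rule inj_onI)
      fix c c' assume c: "c \<in> A" "c' \<in> A" "h c = h c'"
      then have "act (g c) a = act (g c') a" using keq by (simp add: h_def)
      moreover have "c = act (g c) a" "c' = act (g c') a" using g c by auto
      ultimately show "c = c'" by simp
    qed
    show "h ` A = principal e"
    proof
      show "h ` A \<subseteq> principal e" by (auto simp: h_def principal_def)
      show "principal e \<subseteq> h ` A"
      proof
        fix z assume "z \<in> principal e"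
        then obtain m where z: "z = m * e" by (auto simp: principal_def)
        have c: "act m a \<in> A" using a by auto
        have "act (g (act m a)) a = act m a" using g[OF c] by simp
        then have "h (act m a) = z" using keq by (simp add: h_def z)
        then show "z \<in> h ` A" using c by blast
      qed
    qed
  qed
  ultimately show ?thesis using idem unfolding mset_iso_def by blast
qed

theorem theorem3p14:
  fixes dummy :: "'a::{monoid_mult, finite}"
  shows
    \<comment> \<open>every filtered left M-set is isomorphic to Me for some idempotent e\<close>
    "(\<forall>(A::'b set) (act::'a \<Rightarrow> 'b \<Rightarrow> 'b). left_mset A act \<and> filtered A act \<longrightarrow>
        (\<exists>e::'a. idempotent e \<and> mset_iso A act (principal e) (*)))
   \<and> \<comment> \<open>the functor e \<mapsto> Me lands in filtered left M-sets\<close>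
    (\<forall>e::'a. idempotent e \<longrightarrow> left_mset (principal e) (*) \<and> filtered (principal e) (*))
   \<and> \<comment> \<open>functoriality: identities and composition\<close>
    (\<forall>e::'a. idempotent e \<longrightarrow> Fmor e e = (\<lambda>x\<in>principal e. x))
   \<and> (\<forall>e f g a b::'a. idempotent e \<and> idempotent f \<and> idempotent g \<and>
        a \<in> homI e f \<and> b \<in> homI f g \<longrightarrow>
        Fmor g (b * a) = compose (principal g) (Fmor f a) (Fmor g b))
   \<and> \<comment> \<open>full faithfulness: a \<mapsto> Fmor f a is a bijection fMe \<cong> Hom_M(Mf, Me)\<close>
    (\<forall>e f::'a. idempotent e \<and> idempotent f \<longrightarrow>
        bij_betw (Fmor f) (homI e f)
          {h \<in> extensional (principal f). mset_hom (principal f) (*) (principal e) (*) h})"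
proof (intro conjI allI impI)
  fix A :: "'b set" and act :: "'a \<Rightarrow> 'b \<Rightarrow> 'b"
  assume "left_mset A act \<and> filtered A act"
  then show "\<exists>e::'a. idempotent e \<and> mset_iso A act (principal e) (*)" using part1 by blast
next
  fix e :: 'a assume e: "idempotent e"
  have pe: "x \<in> principal e \<Longrightarrow> x * e = x" for x using e
    by (auto simp: principal_def idempotent_def mult.assoc)
  show "left_mset (principal e) (*)"
    unfolding left_mset_def principal_def by (auto simp flip: mult.assoc)
  show "filtered (principal e) (*)"
    unfolding filtered_def
  proof (intro conjI allI impI ballI)
    show "principal e \<noteq> {}" unfolding principal_def by auto
  next
    fix m1 m2 a assume a: "a \<in> principal e" and "m1 * a = m2 * a"
    moreover have "e \<in> principal e" unfolding principal_def by (auto intro: exI[of _ 1])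
    ultimately show "\<exists>m a'. a' \<in> principal e \<and> m * a' = a \<and> m1 * m = m2 * m"
      using pe[OF a] by blast
  next
    fix a1 a2 assume "a1 \<in> principal e" "a2 \<in> principal e"
    moreover have "e \<in> principal e" unfolding principal_def by (auto intro: exI[of _ 1])
    ultimately show "\<exists>m1 m2 a. a \<in> principal e \<and> m1 * a = a1 \<and> m2 * a = a2"
      using pe by blast
  qed
next
  fix e :: 'a assume e: "idempotent e"
  have pe: "x \<in> principal e \<Longrightarrow> x * e = x" for x using e
    by (auto simp: principal_def idempotent_def mult.assoc)
  show "Fmor e e = (\<lambda>x\<in>principal e. x)"
    unfolding Fmor_def using pe by (intro restrict_ext) auto
next
  fix e f g a b :: 'a
  assume H: "idempotent e \<and> idempotent f \<and> idempotent g \<and> a \<in> homI e f \<and> b \<in> homI f g"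
  then obtain n where b: "b = g * n * f" by (auto simp: homI_def)
  have "x * b \<in> principal f" for x unfolding b principal_def by (auto simp flip: mult.assoc)
  then show "Fmor g (b * a) = compose (principal g) (Fmor f a) (Fmor g b)"
    unfolding Fmor_def compose_def by (intro ext) (auto simp: mult.assoc)
next
  fix e f :: 'a assume H: "idempotent e \<and> idempotent f"
  let ?H = "{h \<in> extensional (principal f). mset_hom (principal f) (*) (principal e) (*) h}"
  have ee: "e * e = e" and ff: "f * f = f" using H by (auto simp: idempotent_def)
  have fP: "f \<in> principal f" unfolding principal_def by (auto intro: exI[of _ 1])
  have fa: "a \<in> homI e f \<Longrightarrow> f * a = a" for a
    by (auto simp: homI_def mult.assoc[symmetric] ff)
  show "bij_betw (Fmor f) (homI e f) ?H"
    unfolding bij_betw_def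
  proof (intro conjI)
    show "inj_on (Fmor f) (homI e f)"
    proof (rule inj_onI)
      fix a a' assume "a \<in> homI e f" "a' \<in> homI e f" "Fmor f a = Fmor f a'"
      then have "Fmor f a f = Fmor f a' f" by simp
      then show "a = a'" using fP fa \<open>a \<in> homI e f\<close> \<open>a' \<in> homI e f\<close> by (simp add: Fmor_def)
    qed
    show "Fmor f ` homI e f = ?H"
    proof
      show "Fmor f ` homI e f \<subseteq> ?H"
      proof
        fix h assume "h \<in> Fmor f ` homI e f"
        then obtain a m where h: "h = Fmor f a" and a: "a = f * m * e" by (auto simp: homI_def)
        have "x * a \<in> principal e" for x unfolding a principal_def by (auto simp flip: mult.assoc)
        moreover have "x \<in> principal f \<Longrightarrow> m' * x \<in> principal f" for x m'
          by (auto simp: principal_def simp flip: mult.assoc)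
        ultimately show "h \<in> ?H" unfolding h Fmor_def mset_hom_def by (auto simp: mult.assoc)
      qed
    next
      show "?H \<subseteq> Fmor f ` homI e f"
      proof
        fix h assume h: "h \<in> ?H"
        define a where "a = h f"
        have hm: "\<And>m x. x \<in> principal f \<Longrightarrow> h (m * x) = m * h x"
          and hP: "\<And>x. x \<in> principal f \<Longrightarrow> h x \<in> principal e"
          using h by (auto simp: mset_hom_def)
        have afa: "f * a = a" using hm[OF fP, of f] ff by (simp add: a_def)
        have aP: "a \<in> principal e" using hP[OF fP] by (simp add: a_def)
        then have ae: "a * e = a" using ee by (auto simp: principal_def mult.assoc)
        have "a = f * a * e" using afa ae by simp
        then have aH: "a \<in> homI e f" unfolding homI_def by blast
        have "h = Fmor f a"
        proof
          fix x show "h x = Fmor f a x"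
          proof (cases "x \<in> principal f")
            case True
            then obtain y where y: "x = y * f" by (auto simp: principal_def)
            have "h x = y * a" using hm[OF fP, of y] by (simp add: y a_def)
            also have "\<dots> = x * a" using afa by (simp add: y mult.assoc)
            finally show ?thesis using True by (simp add: Fmor_def)
          next
            case False then show ?thesis using h by (auto simp: Fmor_def extensional_def)
          qed
        qed
        then show "h \<in> Fmor f ` homI e f" using aH by blast
      qed
    qed
  qed
qed

end
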